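(* Let $\mathbb{F}$ be a field and $\mathcal{C}_2 \subsetneqq \mathcal{C}_1 \subseteq \mathbb{F}^{m \times n}$ linear codes. Then $K_{M,0}(\mathcal{C}_1,\mathcal{C}_2) = 0$, $K_{M,n}(\mathcal{C}_1,\mathcal{C}_2) = \dim(\mathcal{C}_1) - \dim(\mathcal{C}_2)$, and for every $0 \leq \mu \leq n-1$, $$0 \leq K_{M,\mu+1}(\mathcal{C}_1,\mathcal{C}_2) - K_{M,\mu}(\mathcal{C}_1,\mathcal{C}_2) \leq m.$$
   Context: ${\rm Row}(V)$ is the row space. For a subspace $\mathcal{L} \subseteq \mathbb{F}^n$, $\mathcal{V}_\mathcal{L} = \{V \in \mathbb{F}^{m\times n} \mid {\rm Row}(V) \subseteq \mathcal{L}\}$. For $0 \le \mu \le n$, $K_{M,\mu}(\mathcal{C}_1,\mathcal{C}_2) = \max\{\dim(\mathcal{C}_1 \cap \mathcal{V}_\mathcal{L}) - \dim(\mathcal{C}_2 \cap \mathcal{V}_\mathcal{L}) \mid \mathcal{L} \subseteq \mathbb{F}^n \text{ subspace}, \dim \mathcal{L} \le \mu\}$. *)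

theory Defs
  imports "HOL-Analysis.Analysis"
begin

text \<open>Matrices in F^(m x n) are modelled as 'a^'n^'m (rows indexed by 'm, columns by 'n),
  with m = CARD('m), n = CARD('n). Scalar multiplication of matrices is entrywise.\<close>

definition mscale :: "'a::field \<Rightarrow> 'a^'n^'m \<Rightarrow> 'a^'n^'m" where
  "mscale c A = (\<chi> i j. c * A $ i $ j)"

interpretation mat: vector_space "mscale :: 'a::field \<Rightarrow> 'a^'n^'m \<Rightarrow> 'a^'n^'m"
  by unfold_locales (auto simp: mscale_def vec_eq_iff algebra_simps)

definition RowSp :: "'a::field^'n^'m \<Rightarrow> ('a^'n) set" where
  "RowSp V = vec.span (range (\<lambda>i. V $ i))"

definition VL :: "('a::field^'n) set \<Rightarrow> ('a^'n^'m) set" where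
  "VL L = {V. RowSp V \<subseteq> L}"

definition KM :: "nat \<Rightarrow> ('a::field^'n^'m) set \<Rightarrow> ('a^'n^'m) set \<Rightarrow> int" where
  "KM mu C1 C2 = Max {int (mat.dim (C1 \<inter> VL L)) - int (mat.dim (C2 \<inter> VL L)) | L.
        vec.subspace L \<and> vec.dim L \<le> mu}"

end

theory Submission
  imports Defs
begin

definition Em :: "'m \<Rightarrow> 'n \<Rightarrow> 'a::field^'n^'m" where
  "Em i j = (\<chi> a b. if a = i \<and> b = j then 1 else 0)"
definition Emat :: "('a::field^'n^'m) set" where
  "Emat = (\<lambda>(i,j). Em i j) ` UNIV"
lemma Em_comp: "Em i j $ a $ b = (if a = i \<and> b = j then 1 else 0)"
  by (simp add: Em_def)
lemma Em_inj: "(Em i j :: 'a::field^'n^'m) = Em a b \<longleftrightarrow> i = a \<and> j = b"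
proof
  assume "Em i j = (Em a b :: 'a::field^'n^'m)"
  then have "(Em i j :: 'a::field^'n^'m) $ i $ j = Em a b $ i $ j" by simp
  then show "i = a \<and> j = b" by (simp add: Em_comp split: if_splits)
qed simp
lemma Emat_comp: "y \<in> (Emat :: ('a::field^'n^'m) set) \<Longrightarrow> y $ i $ j = (if y = Em i j then 1 else 0)"
proof -
  assume "y \<in> Emat"
  then obtain a b where y: "y = Em a b" unfolding Emat_def by auto
  show ?thesis unfolding y Em_inj Em_comp by auto
qed
lemma mscale_sum_comp: "(\<Sum>x\<in>S. mscale (g x) (h x :: 'a::field^'n^'m)) $ i $ j = (\<Sum>x\<in>S. g x * h x $ i $ j)"
  by (simp add: mscale_def)
lemma Emat_indep: "mat.independent (Emat :: ('a::field^'n^'m) set)"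
proof (rule mat.independent_if_scalars_zero)
  show "finite (Emat :: ('a::field^'n^'m) set)" unfolding Emat_def by simp
next
  have fin: "finite (Emat :: ('a::field^'n^'m) set)" unfolding Emat_def by simp
  fix g and x :: "'a^'n^'m" assume s: "(\<Sum>x\<in>(Emat :: ('a::field^'n^'m) set). mscale (g x) x) = 0" and x: "x \<in> Emat"
  then obtain i :: 'm and j :: 'n where xe: "x = Em i j" unfolding Emat_def by auto
  have "0 = (\<Sum>y\<in>(Emat :: ('a::field^'n^'m) set). mscale (g y) y) $ i $ j" using s by simp
  also have "\<dots> = (\<Sum>y\<in>Emat. g y * y $ i $ j)" by (rule mscale_sum_comp)
  also have "\<dots> = (\<Sum>y\<in>Emat. if y = x then g y else 0)"
    by (rule sum.cong[OF refl]) (simp add: Emat_comp xe)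
  also have "\<dots> = g x" using x fin by (simp add: sum.delta')
  finally show "g x = 0" by simp
qed

lemma Emat_span: "mat.span (Emat :: ('a::field^'n^'m) set) = UNIV"
proof -
  { fix V :: "'a^'n^'m"
    have eq: "(\<Sum>p\<in>UNIV. mscale (V $ fst p $ snd p) (Em (fst p) (snd p))) = V"
    proof (subst vec_eq_iff, intro allI, subst vec_eq_iff, intro allI)
      fix a b
      have "(\<Sum>p\<in>UNIV. mscale (V $ fst p $ snd p) (Em (fst p) (snd p) :: 'a^'n^'m)) $ a $ b
            = (\<Sum>p\<in>UNIV. V $ fst p $ snd p * Em (fst p) (snd p) $ a $ b)" by (rule mscale_sum_comp)
      also have "\<dots> = (\<Sum>p\<in>UNIV. if p = (a,b) then V $ fst p $ snd p else 0)"
        by (rule sum.cong[OF refl]) (case_tac x, simp add: Em_comp)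
      also have "\<dots> = V $ a $ b" by simp
      finally show "(\<Sum>p\<in>UNIV. mscale (V $ fst p $ snd p) (Em (fst p) (snd p) :: 'a^'n^'m)) $ a $ b = V $ a $ b" .
    qed
    have "(\<Sum>p\<in>UNIV. mscale (V $ fst p $ snd p) (Em (fst p) (snd p))) \<in> mat.span Emat"
      by (rule mat.span_sum, rule mat.span_scale, rule mat.span_base) (auto simp: Emat_def)
    then have "V \<in> mat.span Emat" by (simp only: eq)
  }
  then show ?thesis by auto
qed

lemma Emat_fin: "finite (Emat :: ('a::field^'n^'m) set)" unfolding Emat_def by simp

interpretation matf: finite_dimensional_vector_space "mscale :: 'a::field \<Rightarrow> 'a^'n^'m \<Rightarrow> 'a^'n^'m" Emat
  by unfold_locales (rule Emat_fin, rule Emat_indep, rule Emat_span)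


lemma VL_iff:
  assumes "vec.subspace L"
  shows "V \<in> VL L \<longleftrightarrow> (\<forall>i. V $ i \<in> L)"
proof
  assume "V \<in> VL L"
  then have "RowSp V \<subseteq> L" by (simp add: VL_def)
  then show "\<forall>i. V $ i \<in> L" unfolding RowSp_def using vec.span_base by blast
next
  assume "\<forall>i. V $ i \<in> L"
  then have "range (\<lambda>i. V $ i) \<subseteq> L" by auto
  then have "RowSp V \<subseteq> L" unfolding RowSp_def using vec.span_minimal assms by blast
  then show "V \<in> VL L" by (simp add: VL_def)
qed

lemma mscale_row: "mscale c V $ i = c *s (V $ i)"
  by (simp add: mscale_def vec_eq_iff)

lemma VL_subspace:
  assumes L: "vec.subspace L"
  shows "mat.subspace (VL L :: ('a::field^'n^'m) set)"
  unfolding mat.subspace_def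
  using vec.subspace_0[OF L] vec.subspace_add[OF L] vec.subspace_scale[OF L]
  by (auto simp: VL_iff[OF L] mscale_row)

lemma VL_UNIV: "VL UNIV = UNIV"
  by (simp add: VL_def)

lemma VL_mono: "L' \<subseteq> L \<Longrightarrow> VL L' \<subseteq> VL L"
  by (auto simp: VL_def)

definition fK :: "('a::field^'n^'m) set \<Rightarrow> ('a^'n^'m) set \<Rightarrow> ('a^'n) set \<Rightarrow> int" where
  "fK C1 C2 L = int (mat.dim (C1 \<inter> VL L)) - int (mat.dim (C2 \<inter> VL L))"

lemma KM_eq: "KM mu C1 C2 = Max (fK C1 C2 ` {L. vec.subspace L \<and> vec.dim L \<le> mu})"
  unfolding KM_def fK_def by (rule arg_cong[where f=Max]) blast

lemma fK_fin:
  fixes C1 C2 :: "('a::field^'n^'m) set"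
  shows "finite (fK C1 C2 ` S)"
proof -
  let ?D = "int (mat.dim (UNIV :: ('a^'n^'m) set))"
  have "fK C1 C2 ` S \<subseteq> {-?D..?D}"
  proof
    fix x assume "x \<in> fK C1 C2 ` S"
    then obtain L where x: "x = fK C1 C2 L" by auto
    have "mat.dim (C1 \<inter> VL L) \<le> mat.dim (UNIV :: ('a^'n^'m) set)"
         "mat.dim (C2 \<inter> VL L) \<le> mat.dim (UNIV :: ('a^'n^'m) set)"
      by (rule matf.dim_subset, simp)+
    then show "x \<in> {-?D..?D}" unfolding x fK_def by auto
  qed
  then show ?thesis using finite_subset by blast
qed

lemma fK_bound:
  assumes s1: "mat.subspace C1" and s2: "mat.subspace C2" and sub: "C2 \<subseteq> C1"
    and L: "vec.subspace L"
  shows "fK C1 C2 L \<le> int (mat.dim C1) - int (mat.dim C2)"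
proof -
  let ?A = "C1 \<inter> VL L"
  have sA: "mat.subspace ?A" by (rule mat.subspace_inter[OF s1 VL_subspace[OF L]])
  have d: "mat.dim {x + y |x y. x \<in> ?A \<and> y \<in> C2} + mat.dim (?A \<inter> C2) = mat.dim ?A + mat.dim C2"
    by (rule matf.dim_sums_Int[OF sA s2])
  have "?A \<inter> C2 = C2 \<inter> VL L" using sub by auto
  then have "mat.dim (?A \<inter> C2) = mat.dim (C2 \<inter> VL L)" by (simp only:)
  moreover have "{x + y |x y. x \<in> ?A \<and> y \<in> C2} \<subseteq> C1"
    using sub mat.subspace_add[OF s1] by auto
  then have "mat.dim {x + y |x y. x \<in> ?A \<and> y \<in> C2} \<le> mat.dim C1" by (rule matf.dim_subset)
  ultimately show ?thesis using d unfolding fK_def by linarith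
qed

definition Rv :: "('a::field^'n) \<Rightarrow> 'm \<Rightarrow> 'a^'n^'m" where
  "Rv v i = (\<chi> k. if k = i then v else 0)"

lemma decomp:
  fixes V :: "'a::field^'n^'m"
  assumes L': "vec.subspace L'" and ins: "L \<subseteq> vec.span (insert v L')"
    and L: "vec.subspace L" and V: "V \<in> VL L"
  shows "\<exists>x u. V = x + u \<and> x \<in> VL L' \<and> u \<in> mat.span (range (Rv v))"
proof -
  have ex: "\<forall>i. \<exists>k. V $ i - k *s v \<in> L'"
  proof
    fix i
    have "V $ i \<in> L" using V VL_iff[OF L] by blast
    then have "V $ i \<in> vec.span (insert v L')" using ins by blast
    moreover have "vec.span L' = L'" using L' by simp
    ultimately show "\<exists>k. V $ i - k *s v \<in> L'" unfolding vec.span_insert by simp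
  qed
  define a where "a i = (SOME k. V $ i - k *s v \<in> L')" for i
  have a: "V $ i - a i *s v \<in> L'" for i
    unfolding a_def by (rule someI_ex) (rule ex[rule_format])
  define x :: "'a^'n^'m" where "x = (\<chi> i. V $ i - a i *s v)"
  define u :: "'a^'n^'m" where "u = (\<chi> i. a i *s v)"
  have "V = x + u" by (simp add: x_def u_def vec_eq_iff)
  moreover have "x \<in> VL L'" using a by (simp add: VL_iff[OF L'] x_def)
  moreover have "u = (\<Sum>i\<in>UNIV. mscale (a i) (Rv v i))"
  proof (subst vec_eq_iff, intro allI, subst vec_eq_iff, intro allI)
    fix i j
    have "(\<Sum>k\<in>UNIV. mscale (a k) (Rv v k :: 'a^'n^'m)) $ i $ j = (\<Sum>k\<in>UNIV. a k * Rv v k $ i $ j)"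
      by (rule mscale_sum_comp)
    also have "\<dots> = (\<Sum>k\<in>UNIV. if k = i then a k * v $ j else 0)"
      by (rule sum.cong[OF refl]) (simp add: Rv_def)
    also have "\<dots> = u $ i $ j" by (simp add: u_def)
    finally show "u $ i $ j = (\<Sum>k\<in>UNIV. mscale (a k) (Rv v k :: 'a^'n^'m)) $ i $ j" by (rule sym)
  qed
  then have "u \<in> mat.span (range (Rv v))"
    by (simp only:) (rule mat.span_sum, rule mat.span_scale, rule mat.span_base, simp)
  ultimately show ?thesis by blast
qed

lemma fK_step:
  fixes C1 C2 :: "('a::field^'n^'m) set"
  assumes s1: "mat.subspace C1" and s2: "mat.subspace C2"
    and L: "vec.subspace L" and L': "vec.subspace L'" and sub: "L' \<subseteq> L"
    and ins: "L \<subseteq> vec.span (insert v L')"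
  shows "fK C1 C2 L \<le> fK C1 C2 L' + int CARD('m)"
proof -
  let ?A = "C1 \<inter> VL L" and ?B = "VL L' :: ('a^'n^'m) set" and ?S = "mat.span (range (Rv v)) :: ('a^'n^'m) set"
  have sA: "mat.subspace ?A" by (rule mat.subspace_inter[OF s1 VL_subspace[OF L]])
  have sB: "mat.subspace ?B" by (rule VL_subspace[OF L'])
  have sS: "mat.subspace ?S" by simp
  have VLs: "?B \<subseteq> VL L" by (rule VL_mono[OF sub])
  have d1: "mat.dim {x + y |x y. x \<in> ?A \<and> y \<in> ?B} + mat.dim (?A \<inter> ?B) = mat.dim ?A + mat.dim ?B"
    by (rule matf.dim_sums_Int[OF sA sB])
  have d2: "mat.dim {x + y |x y. x \<in> ?B \<and> y \<in> ?S} + mat.dim (?B \<inter> ?S) = mat.dim ?B + mat.dim ?S"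
    by (rule matf.dim_sums_Int[OF sB sS])
  have "?A \<inter> ?B = C1 \<inter> VL L'" using VLs by auto
  then have AB: "mat.dim (?A \<inter> ?B) = mat.dim (C1 \<inter> VL L')" by (simp only:)
  have "mat.dim ?S = mat.dim (range (Rv v) :: ('a^'n^'m) set)" by (rule mat.dim_span)
  also have "\<dots> \<le> card (range (Rv v) :: ('a^'n^'m) set)"
    by (rule mat.dim_le_card) (auto intro: mat.span_base)
  also have "\<dots> \<le> CARD('m)" by (rule card_image_le) simp
  finally have dS: "mat.dim ?S \<le> CARD('m)" .
  have incl: "{x + y |x y. x \<in> ?A \<and> y \<in> ?B} \<subseteq> {x + y |x y. x \<in> ?B \<and> y \<in> ?S}"
  proof
    fix z assume "z \<in> {x + y |x y. x \<in> ?A \<and> y \<in> ?B}"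
    then obtain x y where z: "z = x + y" and x: "x \<in> ?A" and y: "y \<in> ?B" by blast
    obtain x' u where "x = x' + u" "x' \<in> ?B" "u \<in> ?S"
      using decomp[OF L' ins L, of x] x by blast
    moreover have "x' + y \<in> ?B" using `x' \<in> ?B` y mat.subspace_add[OF sB] by blast
    ultimately have "z = (x' + y) + u \<and> x' + y \<in> ?B \<and> u \<in> ?S" using z by (simp add: algebra_simps)
    then show "z \<in> {x + y |x y. x \<in> ?B \<and> y \<in> ?S}" by blast
  qed
  have i1: "mat.dim {x + y |x y. x \<in> ?A \<and> y \<in> ?B} \<le> mat.dim {x + y |x y. x \<in> ?B \<and> y \<in> ?S}"
    by (rule matf.dim_subset[OF incl])
  have i2: "mat.dim (C2 \<inter> VL L') \<le> mat.dim (C2 \<inter> VL L)"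
    by (rule matf.dim_subset) (use VLs in auto)
  show ?thesis using d1 d2 AB dS i1 i2 unfolding fK_def by linarith
qed

theorem proposition13:
  fixes C1 C2 :: "('a::field^'n^'m) set"
  assumes "mat.subspace C1" and "mat.subspace C2" and "C2 \<subset> C1"
  shows "KM 0 C1 C2 = 0 \<and>
         KM CARD('n) C1 C2 = int (mat.dim C1) - int (mat.dim C2) \<and>
         (\<forall>mu. mu \<le> CARD('n) - 1 \<longrightarrow>
           0 \<le> KM (mu + 1) C1 C2 - KM mu C1 C2 \<and>
           KM (mu + 1) C1 C2 - KM mu C1 C2 \<le> int CARD('m))"
proof -
  note s1 = assms(1) and s2 = assms(2)
  have sub: "C2 \<subseteq> C1" using assms(3) by blast
  define S :: "nat \<Rightarrow> ('a^'n) set set" where "S mu = {L. vec.subspace L \<and> vec.dim L \<le> mu}" for mu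
  have KMe: "KM mu C1 C2 = Max (fK C1 C2 ` S mu)" for mu unfolding S_def by (rule KM_eq)
  have fin: "finite (fK C1 C2 ` S mu)" for mu by (rule fK_fin)
  have zS: "{0} \<in> S mu" for mu unfolding S_def by simp
  then have ne: "fK C1 C2 ` S mu \<noteq> {}" for mu by blast
  have k0: "KM 0 C1 C2 = 0"
  proof -
    have h: "fK C1 C2 L = 0" if "L \<in> S 0" for L
    proof -
      have L: "vec.subspace L" and L0: "L \<subseteq> {0}" using that unfolding S_def by auto
      have "V = 0" if "V \<in> VL L" for V :: "'a^'n^'m"
      proof -
        have "\<forall>i. V $ i = 0" using that VL_iff[OF L] L0 by blast
        then show "V = 0" by (simp add: vec_eq_iff)
      qed
      then have z1: "C1 \<inter> VL L \<subseteq> {0}" and z2: "C2 \<inter> VL L \<subseteq> {0}" by auto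
      have "mat.dim (C1 \<inter> VL L) = 0" by (rule matf.dim_eq_0[THEN iffD2, OF z1])
      moreover have "mat.dim (C2 \<inter> VL L) = 0" by (rule matf.dim_eq_0[THEN iffD2, OF z2])
      ultimately show ?thesis unfolding fK_def by (simp only: of_nat_0 diff_self)
    qed
    have "fK C1 C2 ` S 0 = {0}"
    proof (intro equalityI subsetI)
      fix x assume "x \<in> fK C1 C2 ` S 0"
      then obtain L where "L \<in> S 0" "x = fK C1 C2 L" by blast
      then show "x \<in> {0}" using h by simp
    next
      fix x :: int assume "x \<in> {0}"
      then have "x = fK C1 C2 {0}" using h[OF zS[of 0]] by simp
      then show "x \<in> fK C1 C2 ` S 0" using zS[of 0] by (simp only: image_eqI)
    qed
    then show ?thesis using KMe by simp
  qed
  have kn: "KM CARD('n) C1 C2 = int (mat.dim C1) - int (mat.dim C2)"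
  proof (rule antisym)
    show "KM CARD('n) C1 C2 \<le> int (mat.dim C1) - int (mat.dim C2)"
      unfolding KMe
    proof (rule Max.boundedI[OF fin ne])
      fix x assume "x \<in> fK C1 C2 ` S CARD('n)"
      then obtain L where "L \<in> S CARD('n)" and x: "x = fK C1 C2 L" by blast
      then have "vec.subspace L" unfolding S_def by blast
      then show "x \<le> int (mat.dim C1) - int (mat.dim C2)" unfolding x by (rule fK_bound[OF s1 s2 sub])
    qed
    have "vec.dim (UNIV::('a^'n) set) \<le> CARD('n)" by (rule dim_subset_UNIV_cart_gen)
    then have "UNIV \<in> S CARD('n)" unfolding S_def by simp
    moreover have "fK C1 C2 UNIV = int (mat.dim C1) - int (mat.dim C2)"
      by (simp add: fK_def VL_UNIV)
    ultimately show "int (mat.dim C1) - int (mat.dim C2) \<le> KM CARD('n) C1 C2"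
      unfolding KMe using Max_ge[OF fin imageI] by metis
  qed
  have mono: "KM mu C1 C2 \<le> KM (mu + 1) C1 C2" for mu
  proof -
    have "S mu \<subseteq> S (mu + 1)" unfolding S_def by auto
    then show ?thesis unfolding KMe using fin ne by (intro Max_mono) auto
  qed
  have stp: "KM (mu + 1) C1 C2 \<le> KM mu C1 C2 + int CARD('m)" for mu
  proof -
    have "KM (mu + 1) C1 C2 \<in> fK C1 C2 ` S (mu + 1)" unfolding KMe using fin ne by (rule Max_in)
    then obtain L where LS: "L \<in> S (mu + 1)" and KL: "KM (mu + 1) C1 C2 = fK C1 C2 L" by auto
    have L: "vec.subspace L" and dL: "vec.dim L \<le> mu + 1" using LS unfolding S_def by auto
    have ge: "fK C1 C2 L' \<le> KM mu C1 C2" if "L' \<in> S mu" for L'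
      unfolding KMe by (rule Max_ge[OF fin imageI[OF that]])
    show ?thesis
    proof (cases "vec.dim L \<le> mu")
      case True
      then have "L \<in> S mu" using L unfolding S_def by auto
      then show ?thesis using ge[of L] KL by simp
    next
      case False
      then have dL1: "vec.dim L = mu + 1" using dL by auto
      obtain B where B: "B \<subseteq> L" "vec.independent B" "L \<subseteq> vec.span B" "card B = vec.dim L"
        by (rule vec.basis_exists)
      then have "B \<noteq> {}" using dL1 by auto
      then obtain v where vB: "v \<in> B" by blast
      have finB: "finite B" using B(2) vec.finiteI_independent by blast
      define L' where "L' = vec.span (B - {v})"
      have L': "vec.subspace L'" unfolding L'_def by simp
      have "vec.dim L' = card (B - {v})" unfolding L'_def
        by (rule vec.dim_span_eq_card_independent[OF vec.independent_mono[OF B(2)]]) blast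
      also have "\<dots> = mu" using B(4) dL1 vB finB by simp
      finally have "L' \<in> S mu" using L' unfolding S_def by simp
      moreover have "L' \<subseteq> L"
      proof -
        have "B - {v} \<subseteq> L" using B(1) by blast
        then show ?thesis unfolding L'_def by (rule vec.span_minimal[OF _ L])
      qed
      moreover have "L \<subseteq> vec.span (insert v L')"
      proof -
        have "B \<subseteq> insert v L'" unfolding L'_def by (auto intro: vec.span_base)
        then have "vec.span B \<subseteq> vec.span (insert v L')" by (rule vec.span_mono)
        then show ?thesis using B(3) by blast
      qed
      ultimately have "L' \<in> S mu" "fK C1 C2 L \<le> fK C1 C2 L' + int CARD('m)"
        using fK_step[OF s1 s2 L L'] by blast+
      then show ?thesis using ge[of L'] KL by linarith
    qed
  qed
  show ?thesis
  proof (intro conjI allI impI)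
    fix mu :: nat
    show "0 \<le> KM (mu + 1) C1 C2 - KM mu C1 C2" using mono[of mu] by linarith
    show "KM (mu + 1) C1 C2 - KM mu C1 C2 \<le> int CARD('m)" using stp[of mu] by linarith
  qed (rule k0, rule kn)
qed

end
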